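(* Let $d\in\{2,3\}$, $r_s>0$ and $0<\delta<0.75$. Let robot $i$ have random position $\mathbf{p}_i\sim\mathcal{N}(\hat{\mathbf{p}}_i,\Sigma_i)$ in $\mathbb{R}^d$, and let $o$ be an uncertain obstacle $\mathcal{O}_o=\{\mathbf{x}+\mathbf{d}_o:\mathbf{x}\in\hat{\mathcal{O}}_o\}$ with $\hat{\mathcal{O}}_o\subset\mathbb{R}^d$ a bounded convex polytope and $\mathbf{d}_o\sim\mathcal{N}(0,\Sigma_o)$ ($\Sigma_o$ positive definite), with $\mathbf{d}_o$ independent of $\mathbf{p}_i$. Let $(\mathbf{a}_{io},b_{io})$ be the robot-obstacle uncertainty-aware separating hyperplane constructed as in the context, and suppose $\hat{\mathbf{p}}_i\in\mathcal{V}_i^{u,b}$ (so in particular $\mathbf{a}_{io}^T\hat{\mathbf{p}}_i\le b_{io}-r_s\|\mathbf{a}_{io}\|-\sqrt{2\mathbf{a}_{io}^T\Sigma_i\mathbf{a}_{io}}\,\mathrm{erf}^{-1}(2\sqrt{1-\delta}-1)$). Then $$\Pr\big(\mathrm{dis}(\mathbf{p}_i,\mathcal{O}_o)\ge r_s\big)\ge 1-\delta,$$ where $\mathrm{dis}(\mathbf{p},\mathcal{O})=\min_{\mathbf{q}\in\mathcal{O}}\|\mathbf{p}-\mathbf{q}\|$.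
   Context: Construction of $(\mathbf{a}_{io},b_{io})$: let $W=(\sqrt{\Sigma_o})^{-1}$, $\hat{\mathbf{p}}_i^W=W\hat{\mathbf{p}}_i$, $\hat{\mathcal{O}}_o^W=W\hat{\mathcal{O}}_o$ (so $W\mathbf{d}_o\sim\mathcal{N}(0,I)$). Let $\epsilon=1-\sqrt{1-\delta}$ and $F^{-1}$ the inverse CDF of the chi-squared distribution with $d$ degrees of freedom. Let $\mathcal{S}_o^W$ be a convex polytope, obtained by dilating $\hat{\mathcal{O}}_o^W$, that contains the Minkowski sum $\hat{\mathcal{O}}_o^W+\{\mathbf{d}:\mathbf{d}^T\mathbf{d}\le F^{-1}(1-\epsilon)\}$, with vertices $\psi_1^W,\dots,\psi_{p_o}^W$ (assume $\hat{\mathbf{p}}_i^W\notin\mathcal{S}_o^W$). Solve the quadratic program $\min \|\mathbf{a}^W\|^2$ s.t. $(\mathbf{a}^W)^T\hat{\mathbf{p}}_i^W-b^W\le 1$ (stated as $-1$ side separation in SVM form) and $(\mathbf{a}^W)^T\psi_k^W-b^W\ge 1$ for all $k$, then shift the resulting hyperplane along its normal toward $\mathcal{S}_o^W$ until it touches $\mathcal{S}_o^W$, giving $(\mathbf{a}_{io}^W,b_{io}^W)$ with $\mathcal{S}_o^W\subseteq\{\mathbf{y}:(\mathbf{a}_{io}^W)^T\mathbf{y}\ge b_{io}^W\}$. Finally set $\mathbf{a}_{io}=W^T\mathbf{a}_{io}^W$, $b_{io}=b_{io}^W$. The B-UAVC of robot $i$ is $\mathcal{V}_i^{u,b}=\{\mathbf{p}:\mathbf{a}_{il}^T\mathbf{p}\le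 b_{il}-r_s\|\mathbf{a}_{il}\|-\sqrt{2\mathbf{a}_{il}^T\Sigma_i\mathbf{a}_{il}}\,\mathrm{erf}^{-1}(2\sqrt{1-\delta}-1)\ \forall l\neq i\}$, the intersection over all other robots and obstacles $l$ of such buffered half-spaces, with $\mathrm{erf}(x)=\frac{2}{\sqrt\pi}\int_0^xe^{-t^2}dt$. *)

theory Defs
  imports "HOL-Analysis.Analysis" "HOL-Probability.Probability"
begin

definition sym_mat :: "real^'n^'n \<Rightarrow> bool" where
  "sym_mat S \<longleftrightarrow> transpose S = S"

definition psd_mat :: "real^'n^'n \<Rightarrow> bool" where
  "psd_mat S \<longleftrightarrow> sym_mat S \<and> (\<forall>x. 0 \<le> x \<bullet> (S *v x))"

definition pd_mat :: "real^'n^'n \<Rightarrow> bool" where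
  "pd_mat S \<longleftrightarrow> sym_mat S \<and> (\<forall>x. x \<noteq> 0 \<longrightarrow> 0 < x \<bullet> (S *v x))"

definition normal_measure :: "real \<Rightarrow> real \<Rightarrow> real measure" where
  "normal_measure m v =
     (if v = 0 then return borel m else density lborel (normal_density m (sqrt v)))"

definition gaussian_vec ::
  "'a measure \<Rightarrow> ('a \<Rightarrow> real^'n) \<Rightarrow> real^'n \<Rightarrow> real^'n^'n \<Rightarrow> bool" where
  "gaussian_vec M X mu Sig \<longleftrightarrow>
     psd_mat Sig \<and> X \<in> borel_measurable M \<and>
     (\<forall>c. distr M borel (\<lambda>w. c \<bullet> X w) = normal_measure (c \<bullet> mu) (c \<bullet> (Sig *v c)))"

definition erf :: "real \<Rightarrow> real" where
  "erf x = 2 / sqrt pi * interval_lebesgue_integral lborel (ereal 0) (ereal x) (\<lambda>t. exp (- (t\<^sup>2)))"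

definition erf_inv :: "real \<Rightarrow> real" where
  "erf_inv y = (THE x. erf x = y)"

definition chi2_density :: "nat \<Rightarrow> real \<Rightarrow> real" where
  "chi2_density k x =
     (if x \<le> 0 then 0
      else x powr (real k / 2 - 1) * exp (- x / 2) / (2 powr (real k / 2) * Gamma (real k / 2)))"

definition chi2_cdf :: "nat \<Rightarrow> real \<Rightarrow> real" where
  "chi2_cdf k x = (if x \<le> 0 then 0
     else interval_lebesgue_integral lborel (ereal 0) (ereal x) (chi2_density k))"

definition chi2_inv :: "nat \<Rightarrow> real \<Rightarrow> real" where
  "chi2_inv k q = Inf {x. q \<le> chi2_cdf k x}"

definition buavc ::
  "real \<Rightarrow> real \<Rightarrow> real^'n^'n \<Rightarrow> 'l set \<Rightarrow> ('l \<Rightarrow> real^'n) \<Rightarrow> ('l \<Rightarrow> real) \<Rightarrow> (real^'n) set" where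
  "buavc rs \<delta> Sig L a b =
     {p. \<forall>l\<in>L. a l \<bullet> p \<le> b l - rs * norm (a l)
          - sqrt (2 * (a l \<bullet> (Sig *v a l))) * erf_inv (2 * sqrt (1 - \<delta>) - 1)}"

end

theory Submission
  imports Defs
begin

lemma erf_deriv: "(erf has_real_derivative (2 / sqrt pi * exp (- x\<^sup>2))) (at x)"
proof -
  define a where "a = min 0 x - 1"
  define b where "b = max 0 x + 1"
  have c: "continuous_on {a..b} (\<lambda>t::real. exp (- t\<^sup>2))" by (intro continuous_intros)
  have "((\<lambda>u. LBINT y=ereal 0..ereal u. exp (- y\<^sup>2)) has_vector_derivative exp (- x\<^sup>2)) (at x within {a..b})"
    by (rule interval_integral_FTC2[OF _ _ c, where c=0]) (auto simp: a_def b_def)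
  then have "((\<lambda>u. LBINT y=ereal 0..ereal u. exp (- y\<^sup>2)) has_vector_derivative exp (- x\<^sup>2)) (at x within {a<..<b})"
    by (rule has_vector_derivative_within_subset) auto
  then have "((\<lambda>u. LBINT y=ereal 0..ereal u. exp (- y\<^sup>2)) has_vector_derivative exp (- x\<^sup>2)) (at x)"
    by (subst (asm) has_vector_derivative_within_open) (auto simp: a_def b_def)
  then have "((\<lambda>u. LBINT y=ereal 0..ereal u. exp (- y\<^sup>2)) has_real_derivative exp (- x\<^sup>2)) (at x)"
    by (simp add: has_real_derivative_iff_has_vector_derivative)
  then have "((\<lambda>u. 2 / sqrt pi * (LBINT y=ereal 0..ereal u. exp (- y\<^sup>2))) has_real_derivative 2 / sqrt pi * exp (- x\<^sup>2)) (at x)"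
    by (rule DERIV_cmult)
  then show ?thesis unfolding erf_def[abs_def] .
qed

lemma erf_0[simp]: "erf 0 = 0"
  by (simp add: erf_def)

lemma isCont_erf[continuous_intros]: "isCont erf x"
  using erf_deriv DERIV_isCont by blast

lemma isCont_erf'[continuous_intros]: "isCont f x \<Longrightarrow> isCont (\<lambda>x. erf (f x)) x"
  by (rule isCont_o2[OF _ isCont_erf])

lemma continuous_on_erf: "continuous_on S erf"
  by (simp add: continuous_at_imp_continuous_on isCont_erf)

lemma erf_strict_mono: "x < y \<Longrightarrow> erf x < erf y"
  by (rule DERIV_pos_imp_increasing[of x y erf]) (auto intro!: erf_deriv)

lemma erf_le_iff: "erf x \<le> erf y \<longleftrightarrow> x \<le> y"
  by (metis erf_strict_mono linorder_not_less order_less_imp_le order_le_less)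

lemma erf_odd: "erf (- x) = - erf x"
proof -
  have "\<forall>x. ((\<lambda>x. erf (- x) + erf x) has_real_derivative 0) (at x)"
  proof
    fix x
    have d1: "((\<lambda>z. erf (- z)) has_real_derivative (2 / sqrt pi * exp (- (-x)\<^sup>2)) * (-1)) (at x)"
      by (rule DERIV_chain2[OF erf_deriv]) (auto intro!: derivative_eq_intros)
    have "((\<lambda>x. erf (- x) + erf x) has_real_derivative
       (2 / sqrt pi * exp (- (-x)\<^sup>2)) * (-1) + 2 / sqrt pi * exp (- x\<^sup>2)) (at x)"
      by (rule DERIV_add[OF d1 erf_deriv])
    then show "((\<lambda>x. erf (- x) + erf x) has_real_derivative 0) (at x)" by simp
  qed
  from DERIV_isconst_all[OF this, of x 0] show ?thesis by simp
qed

lemma erf_Icc: "0 \<le> x \<Longrightarrow> erf x = 2 / sqrt pi * (LBINT t:{0..x}. exp (- t\<^sup>2))"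
  unfolding erf_def using interval_integral_Icc[of 0 x] by (simp add: zero_ereal_def)

lemma erf_at_top: "(erf \<longlongrightarrow> 1) at_top"
proof -
  have g: "has_bochner_integral lborel (\<lambda>x. indicator {0..} x *\<^sub>R exp (- x\<^sup>2)) (sqrt pi / 2)"
    by (rule gaussian_moment_0)
  have si: "set_integrable lborel {0..} (\<lambda>x::real. exp (- x\<^sup>2))"
    unfolding set_integrable_def using g integrable.intros by blast
  have sv: "(LBINT t:{0..}. exp (- t\<^sup>2)) = sqrt pi / 2"
    using g unfolding set_lebesgue_integral_def by (simp add: has_bochner_integral_integral_eq)
  have "((\<lambda>b. LBINT t:{0..b}. exp (- t\<^sup>2)) \<longlongrightarrow> sqrt pi / 2) at_top"
    using tendsto_set_lebesgue_integral_at_top[OF _ si] sv by simp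
  then have "((\<lambda>b. 2 / sqrt pi * (LBINT t:{0..b}. exp (- t\<^sup>2))) \<longlongrightarrow> 2 / sqrt pi * (sqrt pi / 2)) at_top"
    by (intro tendsto_mult tendsto_const)
  then have "((\<lambda>b. 2 / sqrt pi * (LBINT t:{0..b}. exp (- t\<^sup>2))) \<longlongrightarrow> 1) at_top"
    by simp
  moreover have "eventually (\<lambda>b. 2 / sqrt pi * (LBINT t:{0..b}. exp (- t\<^sup>2)) = erf b) at_top"
    using eventually_ge_at_top[of 0] by eventually_elim (simp add: erf_Icc)
  ultimately show ?thesis by (rule Lim_transform_eventually)
qed

lemma erf_at_bot: "(erf \<longlongrightarrow> -1) at_bot"
proof -
  have "((\<lambda>x. - erf (- x)) \<longlongrightarrow> -1) at_bot"
    by (intro tendsto_minus filterlim_compose[OF erf_at_top] filterlim_uminus_at_top_at_bot)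
  then show ?thesis by (simp add: erf_odd)
qed

lemma erf_lt_1: "erf x < 1"
proof -
  have "erf (x + 1) \<le> 1"
    by (rule tendsto_lowerbound[OF erf_at_top])
       (auto intro!: eventually_mono[OF eventually_ge_at_top[of "x+1"]] simp: erf_le_iff)
  with erf_strict_mono[of x "x+1"] show ?thesis by simp
qed

lemma erf_gt_m1: "erf x > -1"
  using erf_lt_1[of "-x"] by (simp add: erf_odd)

lemma erf_surj: assumes "-1 < y" "y < 1" shows "\<exists>x. erf x = y"
proof -
  have "eventually (\<lambda>x. erf x > y) at_top"
    using order_tendstoD(1)[OF erf_at_top assms(2)] .
  then obtain b where b: "erf b > y" using eventually_at_top_linorder by (metis order_refl)
  have "eventually (\<lambda>x. erf x < y) at_bot"
    using order_tendstoD(2)[OF erf_at_bot assms(1)] .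
  then obtain a where a: "erf a < y" using eventually_at_bot_linorder by (metis order_refl)
  have ab: "a \<le> b" using a b erf_le_iff by (metis less_trans linorder_not_le order_less_imp_le)
  show ?thesis using IVT[of erf a y b] a b ab isCont_erf by (meson less_imp_le)
qed

lemma erf_erf_inv: assumes "-1 < y" "y < 1" shows "erf (erf_inv y) = y"
proof -
  obtain x where x: "erf x = y" using erf_surj[OF assms] by blast
  have "erf x = y \<and> (\<forall>z. erf z = y \<longrightarrow> z = x)"
    using x erf_le_iff by (metis order_antisym order_refl)
  then have "(THE x. erf x = y) = x" by (intro the_equality) auto
  then show ?thesis unfolding erf_inv_def using x by simp
qed

lemma measure_density_set_integral:
  fixes f :: "real \<Rightarrow> real"
  assumes si: "set_integrable lborel A f" and A: "A \<in> sets borel" and fm: "f \<in> borel_measurable borel"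
    and nn: "\<And>x. 0 \<le> f x"
  shows "measure (density lborel (\<lambda>x. ennreal (f x))) A = (LBINT x:A. f x)"
proof -
  have "emeasure (density lborel (\<lambda>x. ennreal (f x))) A = (\<integral>\<^sup>+x. ennreal (f x) * indicator A x \<partial>lborel)"
    using A fm by (subst emeasure_density) auto
  also have "\<dots> = ennreal (LBINT x:A. f x)"
    unfolding set_lebesgue_integral_def nn_integral_set_ennreal using si nn
    by (subst nn_integral_eq_integral) (simp_all add: mult_ac set_integrable_def)
  moreover have "0 \<le> (LBINT x:A. f x)"
    unfolding set_lebesgue_integral_def using nn
    by (intro Bochner_Integration.integral_nonneg_AE) (auto simp: indicator_def)
  ultimately show ?thesis unfolding measure_def by simp
qed

lemma normal_deriv:
  assumes s: "0 < \<sigma>"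
  shows "((\<lambda>x. (1 + erf ((x - m) / (\<sigma> * sqrt 2))) / 2) has_real_derivative normal_density m \<sigma> x) (at x)"
proof -
  have d: "((\<lambda>x. (x - m) / (\<sigma> * sqrt 2)) has_real_derivative 1 / (\<sigma> * sqrt 2)) (at x)"
    using s by (auto intro!: derivative_eq_intros)
  have "((\<lambda>x. (1 + erf ((x - m) / (\<sigma> * sqrt 2))) / 2) has_real_derivative
      (0 + 2 / sqrt pi * exp (- ((x - m) / (\<sigma> * sqrt 2))\<^sup>2) * (1 / (\<sigma> * sqrt 2))) / 2) (at x)"
    by (intro DERIV_cdivide DERIV_add DERIV_const DERIV_chain2[OF erf_deriv d])
  moreover have "(0 + 2 / sqrt pi * exp (- ((x - m) / (\<sigma> * sqrt 2))\<^sup>2) * (1 / (\<sigma> * sqrt 2))) / 2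
      = normal_density m \<sigma> x"
  proof -
    have e: "- ((x - m) / (\<sigma> * sqrt 2))\<^sup>2 = - (x - m)\<^sup>2 / (2 * \<sigma>\<^sup>2)"
      using s by (simp add: power_divide power_mult_distrib)
    have q: "sqrt (2 * pi * \<sigma>\<^sup>2) = sqrt pi * \<sigma> * sqrt 2"
      using s by (simp add: real_sqrt_mult)
    show ?thesis unfolding normal_density_def e q using s
      by (simp add: field_simps)
  qed
  ultimately show ?thesis by simp
qed

lemma normal_cdf_lt:
  assumes s: "0 < \<sigma>"
  shows "measure (density lborel (\<lambda>x. ennreal (normal_density m \<sigma> x))) {..<t}
       = (1 + erf ((t - m) / (\<sigma> * sqrt 2))) / 2"
proof -
  let ?F = "\<lambda>x. (1 + erf ((x - m) / (\<sigma> * sqrt 2))) / 2"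
  have lim0: "((?F \<circ> real_of_ereal) \<longlongrightarrow> 0) (at_right (-\<infinity>))"
  proof -
    have "filterlim (\<lambda>x. (1 / (\<sigma> * sqrt 2)) * (x - m)) at_bot at_bot"
      by (rule filterlim_tendsto_pos_mult_at_bot[OF tendsto_const])
         (use s filterlim_tendsto_add_at_bot_iff[OF tendsto_const[of "-m"], of id at_bot] in \<open>auto simp: filterlim_ident\<close>)
    then have "filterlim (\<lambda>x. (x - m) / (\<sigma> * sqrt 2)) at_bot at_bot"
      by simp
    then have "(?F \<longlongrightarrow> (1 + -1) / 2) at_bot"
      by (intro tendsto_intros filterlim_compose[OF erf_at_bot]) simp_all
    then show ?thesis unfolding ereal_tendsto_simps by simp
  qed
  have eint: "einterval (-\<infinity>) (ereal t) = {..<t}"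
    by (auto simp: einterval_def)
  have "isCont ?F t" using s by (intro continuous_intros) auto
  then have "(?F \<longlongrightarrow> ?F t) (at_left t)"
    unfolding isCont_def by (rule tendsto_mono[OF at_le, rotated]) simp
  then have lim1: "((?F \<circ> real_of_ereal) \<longlongrightarrow> ?F t) (at_left (ereal t))"
    unfolding ereal_tendsto_simps .
  have cont: "isCont (normal_density m \<sigma>) x" for x
    unfolding normal_density_def[abs_def] using s by (intro continuous_intros) auto
  note ftc0 = interval_integral_FTC_nonneg[of "-\<infinity>" "ereal t" ?F "normal_density m \<sigma>" 0 "?F t",
     OF _ normal_deriv[OF s] cont _ lim0 lim1]
  have ftc: "set_integrable lborel (einterval (-\<infinity>) (ereal t)) (normal_density m \<sigma>)"
     "(LBINT x=-\<infinity>..ereal t. normal_density m \<sigma> x) = ?F t - 0"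
    using ftc0 by auto
  show ?thesis
    using ftc measure_density_set_integral[of "{..<t}" "normal_density m \<sigma>"]
    by (simp add: eint interval_lebesgue_integral_def)
qed

lemma erf_deriv'[derivative_intros]:
  "(f has_real_derivative D) (at x) \<Longrightarrow>
   ((\<lambda>x. erf (f x)) has_real_derivative (2 / sqrt pi * exp (- (f x)\<^sup>2)) * D) (at x)"
  by (rule DERIV_chain2[OF erf_deriv])

lemma Gamma_three_halves: "Gamma (3/2 :: real) = sqrt pi / 2"
proof -
  have "Gamma (1/2 + 1 :: real) = 1/2 * Gamma (1/2)"
  proof (rule Gamma_plus1)
    show "(1/2::real) \<notin> \<int>\<^sub>\<le>\<^sub>0"
    proof
      assume "(1/2::real) \<in> \<int>\<^sub>\<le>\<^sub>0"
      then obtain n where n: "(1/2::real) = of_int n" by (auto simp: nonpos_Ints_def)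
      then have "real_of_int (2 * n) = 1" by simp
      then have "2 * n = 1" by linarith
      then show False by presburger
    qed
  qed
  then show ?thesis by (simp add: Gamma_one_half_real)
qed

lemma chi2_density_2: "t > 0 \<Longrightarrow> chi2_density 2 t = exp (- t / 2) / 2"
  by (simp add: chi2_density_def)

lemma chi2_density_3: "t > 0 \<Longrightarrow> chi2_density 3 t = sqrt t * exp (- t / 2) / (sqrt 2 * sqrt pi)"
proof -
  assume t: "t > 0"
  have a: "t powr (real 3 / 2 - 1) = sqrt t" using t by (simp add: powr_half_sqrt)
  have b: "(2::real) powr (real 3 / 2) = 2 * sqrt 2"
  proof -
    have "(2::real) powr (real 3 / 2) = 2 powr (1 + 1/2)" by simp
    also have "\<dots> = 2 * sqrt 2" by (subst powr_add) (simp add: powr_half_sqrt)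
    finally show ?thesis .
  qed
  have c: "Gamma (real 3 / 2) = sqrt pi / 2" using Gamma_three_halves by simp
  show ?thesis using t unfolding chi2_density_def a b c by (simp add: field_simps)
qed

lemma chi2_K_deriv:
  assumes t: "t > 0"
  shows "((\<lambda>t. erf (sqrt (t / 2)) - sqrt (2 * t / pi) * exp (- t / 2)) has_real_derivative
           sqrt t * exp (- t / 2) / (sqrt 2 * sqrt pi)) (at t)"
proof -
  have d1: "((\<lambda>t. sqrt (t / 2)) has_real_derivative inverse (sqrt (t / 2)) / 2 * (1/2)) (at t)"
    using t by (intro DERIV_chain2[OF DERIV_real_sqrt]) (auto intro!: derivative_eq_intros)
  have d2: "((\<lambda>t. sqrt (2 * t / pi)) has_real_derivative inverse (sqrt (2 * t / pi)) / 2 * (2 / pi)) (at t)"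
    using t by (intro DERIV_chain2[OF DERIV_real_sqrt]) (auto intro!: derivative_eq_intros)
  have d3: "((\<lambda>t. exp (- t / 2)) has_real_derivative exp (- t / 2) * (- 1 / 2)) (at t)"
    by (intro DERIV_chain2[OF DERIV_exp]) (auto intro!: derivative_eq_intros)
  have D: "((\<lambda>t. erf (sqrt (t / 2)) - sqrt (2 * t / pi) * exp (- t / 2)) has_real_derivative
     (2 / sqrt pi * exp (- (sqrt (t / 2))\<^sup>2)) * (inverse (sqrt (t / 2)) / 2 * (1/2))
     - ((inverse (sqrt (2 * t / pi)) / 2 * (2 / pi)) * exp (- t / 2) + (exp (- t / 2) * (- 1 / 2)) * sqrt (2 * t / pi))) (at t)"
    by (intro DERIV_diff DERIV_mult d2 d3 DERIV_chain2[OF erf_deriv d1])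
  have E: "(2 / sqrt pi * exp (- (sqrt (t / 2))\<^sup>2)) * (inverse (sqrt (t / 2)) / 2 * (1/2))
     - ((inverse (sqrt (2 * t / pi)) / 2 * (2 / pi)) * exp (- t / 2) + (exp (- t / 2) * (- 1 / 2)) * sqrt (2 * t / pi))
     = sqrt t * exp (- t / 2) / (sqrt 2 * sqrt pi)"
  proof -
    have r1: "sqrt (t / 2) = sqrt t / sqrt 2" by (simp add: real_sqrt_divide)
    have r2: "sqrt (2 * t / pi) = sqrt 2 * sqrt t / sqrt pi" by (simp add: real_sqrt_divide real_sqrt_mult)
    have r3: "(sqrt (t / 2))\<^sup>2 = t / 2" using t by simp
    have p2: "sqrt 2 * sqrt 2 = (2::real)" by simp
    have pp: "sqrt pi * sqrt pi = pi" by simp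
    have pt: "sqrt t * sqrt t = t" using t by simp
    have "sqrt t > 0" "sqrt pi > 0" using t by auto
    then show ?thesis unfolding r3 unfolding r1 r2
      apply (simp add: field_simps p2 pp pt)
      apply (simp add: mult.assoc[symmetric] p2 pp pt)
      done
  qed
  show ?thesis using D unfolding E .
qed

lemma FTC_cont:
  fixes a b :: real and F f :: "real \<Rightarrow> real"
  assumes ab: "a < b" and Fc: "\<And>x. isCont F x"
    and Fd: "\<And>x. a < x \<Longrightarrow> x < b \<Longrightarrow> (F has_real_derivative f x) (at x)"
    and fc: "\<And>x. a < x \<Longrightarrow> x < b \<Longrightarrow> isCont f x"
    and fn: "\<And>x. a < x \<Longrightarrow> x < b \<Longrightarrow> 0 \<le> f x"
  shows "(LBINT x=ereal a..ereal b. f x) = F b - F a"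
proof -
  have la: "((F \<circ> real_of_ereal) \<longlongrightarrow> F a) (at_right (ereal a))"
    unfolding ereal_tendsto_simps using Fc[of a] unfolding isCont_def
    by (rule tendsto_mono[OF at_le, rotated]) simp
  have lb: "((F \<circ> real_of_ereal) \<longlongrightarrow> F b) (at_left (ereal b))"
    unfolding ereal_tendsto_simps using Fc[of b] unfolding isCont_def
    by (rule tendsto_mono[OF at_le, rotated]) simp
  show ?thesis
    by (rule interval_integral_FTC_nonneg[OF _ _ _ _ la lb]) (use ab Fd fc fn in auto)
qed

lemma chi2_cdf_2: "x > 0 \<Longrightarrow> chi2_cdf 2 x = 1 - exp (- x / 2)"
proof -
  assume x: "x > 0"
  have "chi2_cdf 2 x = (LBINT t=ereal 0..ereal x. chi2_density 2 t)"
    using x by (simp add: chi2_cdf_def)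
  also have "\<dots> = (LBINT t=ereal 0..ereal x. exp (- t / 2) / 2)"
    by (rule interval_integral_cong) (use x in \<open>auto simp: einterval_def chi2_density_2 min_def max_def\<close>)
  also have "\<dots> = (1 - exp (- x / 2)) - (1 - exp (- 0 / 2))"
    by (rule FTC_cont[OF x]) (auto intro!: derivative_eq_intros continuous_intros)
  finally show ?thesis by simp
qed

lemma chi2_cdf_3: "x > 0 \<Longrightarrow> chi2_cdf 3 x = erf (sqrt (x / 2)) - sqrt (2 * x / pi) * exp (- x / 2)"
proof -
  assume x: "x > 0"
  have "chi2_cdf 3 x = (LBINT t=ereal 0..ereal x. chi2_density 3 t)"
    using x by (simp add: chi2_cdf_def)
  also have "\<dots> = (LBINT t=ereal 0..ereal x. sqrt t * exp (- t / 2) / (sqrt 2 * sqrt pi))"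
    by (rule interval_integral_cong) (use x in \<open>auto simp: einterval_def chi2_density_3 min_def max_def\<close>)
  also have "\<dots> = (erf (sqrt (x / 2)) - sqrt (2 * x / pi) * exp (- x / 2))
       - (erf (sqrt (0 / 2)) - sqrt (2 * 0 / pi) * exp (- 0 / 2))"
    by (rule FTC_cont[OF x]; (rule chi2_K_deriv)?; auto intro!: continuous_intros)
  finally show ?thesis by simp
qed

lemma exp_neg_sq_at_top: "((\<lambda>w::real. exp (- w\<^sup>2)) \<longlongrightarrow> 0) at_top"
proof -
  have "filterlim (\<lambda>w::real. w\<^sup>2) at_top at_top"
    by (rule filterlim_pow_at_top[OF _ filterlim_ident]) simp
  then have "filterlim (\<lambda>w::real. - w\<^sup>2) at_bot at_top"
    by (simp add: filterlim_uminus_at_bot)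
  then show ?thesis by (rule filterlim_compose[OF exp_at_bot])
qed

lemma erf_tail_bound:
  assumes v: "0 \<le> v"
  shows "1 - 2 * exp (- v\<^sup>2) \<le> erf v"
proof (cases "v \<le> 1/2")
  case True
  have "exp (- v\<^sup>2) \<ge> 1 + (- v\<^sup>2)" by (rule exp_ge_add_one_self)
  moreover have "v\<^sup>2 \<le> (1/2)\<^sup>2" using True v by (intro power_mono) auto
  moreover have "erf v \<ge> 0" using erf_le_iff[of 0 v] v by simp
  ultimately show ?thesis by (simp add: power2_eq_square)
next
  case False
  let ?g = "\<lambda>w. erf w - 1 + 2 * exp (- w\<^sup>2)"
  have gd: "(?g has_real_derivative 2 / sqrt pi * exp (- w\<^sup>2) - 0 + 2 * (exp (- w\<^sup>2) * (- (2 * w)))) (at w)" for w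
    by (intro derivative_eq_intros erf_deriv DERIV_chain2[OF DERIV_exp]) auto
  have sp: "sqrt pi \<ge> 1" using pi_gt3 by simp
  have dec: "?g w \<le> ?g v" if w: "w \<ge> v" for w
  proof (rule DERIV_nonpos_imp_decreasing_open[OF w])
    fix x assume x: "v < x" "x < w"
    have "2 / sqrt pi \<le> 4 * x"
    proof -
      have "2 / sqrt pi \<le> 2" using sp by (simp add: divide_le_eq)
      then show ?thesis using x False by linarith
    qed
    then have h: "2 / sqrt pi * exp (- x\<^sup>2) \<le> (4 * x) * exp (- x\<^sup>2)"
      by (intro mult_right_mono) auto
    have "2 / sqrt pi * exp (- x\<^sup>2) - 0 + 2 * (exp (- x\<^sup>2) * (- (2 * x))) \<le> 0"
      using h by (simp add: algebra_simps)
    then show "\<exists>y. (?g has_real_derivative y) (at x) \<and> y \<le> 0" using gd by blast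
  next
    show "continuous_on {v..w} ?g" by (intro continuous_intros continuous_on_erf)
  qed
  have lim: "(?g \<longlongrightarrow> 1 - 1 + 2 * 0) at_top"
    by (intro tendsto_intros erf_at_top exp_neg_sq_at_top)
  have ev: "eventually (\<lambda>w. ?g w \<le> ?g v) at_top"
    using eventually_ge_at_top[of v] by eventually_elim (rule dec)
  have "1 - 1 + 2 * 0 \<le> ?g v"
    by (rule tendsto_upperbound[OF lim ev]) simp
  then show ?thesis by simp
qed

lemma chi2_cdf_le_Phi:
  assumes k: "k = 2 \<or> k = 3" and x: "x > 0"
  shows "chi2_cdf k x \<le> (1 + erf (sqrt x / sqrt 2)) / 2"
proof -
  have sx: "sqrt (x / 2) = sqrt x / sqrt 2" by (simp add: real_sqrt_divide)
  from k show ?thesis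
  proof
    assume k2: "k = 2"
    have h0: "1 - 2 * exp (- (sqrt (x / 2))\<^sup>2) \<le> erf (sqrt (x / 2))"
      by (rule erf_tail_bound) (use x in simp)
    have e: "(sqrt (x / 2))\<^sup>2 = x / 2" using x by simp
    have h1: "1 - 2 * exp (- (x / 2)) \<le> erf (sqrt (x / 2))" using h0 unfolding e .
    have h: "1 - 2 * exp (- (x / 2)) \<le> erf (sqrt x / sqrt 2)" using h1 unfolding sx .
    have "chi2_cdf k x = 1 - exp (- x / 2)" using x k2 by (simp add: chi2_cdf_2)
    then show ?thesis using h by simp
  next
    assume k3: "k = 3"
    have c: "chi2_cdf k x \<le> erf (sqrt x / sqrt 2)" using x k3 by (simp add: chi2_cdf_3 sx)
    have "erf (sqrt x / sqrt 2) < 1" by (rule erf_lt_1)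
    then show ?thesis using c by simp
  qed
qed

lemma filterlim_half_at_top: "filterlim (\<lambda>x::real. x / 2) at_top at_top"
  using filterlim_tendsto_pos_mult_at_top[OF tendsto_const[of "1/2"] _ filterlim_ident] by simp

lemma chi2_cdf_at_top:
  assumes k: "k = 2 \<or> k = 3"
  shows "(chi2_cdf k \<longlongrightarrow> 1) at_top"
proof -
  from k show ?thesis
  proof
    assume k2: "k = 2"
    have "filterlim (\<lambda>x::real. - x / 2) at_bot at_top"
      using filterlim_half_at_top by (simp add: filterlim_uminus_at_bot)
    then have "((\<lambda>x::real. 1 - exp (- x / 2)) \<longlongrightarrow> 1 - 0) at_top"
      by (intro tendsto_intros filterlim_compose[OF exp_at_bot])
    moreover have "eventually (\<lambda>x. 1 - exp (- x / 2) = chi2_cdf k x) at_top"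
      using eventually_gt_at_top[of 0] by eventually_elim (simp add: k2 chi2_cdf_2)
    ultimately show ?thesis by (auto intro: Lim_transform_eventually)
  next
    assume k3: "k = 3"
    have f1: "filterlim (\<lambda>x::real. sqrt (x / 2)) at_top at_top"
      by (rule filterlim_compose[OF sqrt_at_top]) (rule filterlim_half_at_top)
    have t1: "((\<lambda>x. erf (sqrt (x / 2))) \<longlongrightarrow> 1) at_top"
      by (rule filterlim_compose[OF erf_at_top f1])
    have "((\<lambda>x::real. x ^ 1 / exp x) \<longlongrightarrow> 0) at_top" by (rule tendsto_power_div_exp_0)
    then have "((\<lambda>x::real. sqrt (2 / pi) * sqrt (x ^ 1 / exp x)) \<longlongrightarrow> sqrt (2 / pi) * sqrt 0) at_top"
      by (intro tendsto_intros)
    moreover have "eventually (\<lambda>x. sqrt (2 / pi) * sqrt (x ^ 1 / exp x) = sqrt (2 * x / pi) * exp (- x / 2)) at_top"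
      using eventually_gt_at_top[of 0]
    proof eventually_elim
      case (elim x)
      have e1: "sqrt (1 / exp x) = exp (- x / 2)"
        by (rule real_sqrt_unique) (simp_all add: power2_eq_square exp_add[symmetric] exp_minus field_simps)
      have e2: "sqrt (x ^ 1 / exp x) = sqrt x * exp (- x / 2)"
      proof -
        have "sqrt (x ^ 1 / exp x) = sqrt x * sqrt (1 / exp x)"
          by (metis power_one_right real_sqrt_mult times_divide_eq_right mult_1_right)
        then show ?thesis using e1 by simp
      qed
      have e3: "sqrt (2 / pi) * sqrt x = sqrt (2 * x / pi)"
        by (simp add: real_sqrt_mult[symmetric])
      show ?case unfolding e2 using e3 by (simp add: mult.assoc[symmetric])
    qed
    ultimately have t2: "((\<lambda>x. sqrt (2 * x / pi) * exp (- x / 2)) \<longlongrightarrow> 0) at_top"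
      by (auto intro: Lim_transform_eventually)
    have "((\<lambda>x. erf (sqrt (x / 2)) - sqrt (2 * x / pi) * exp (- x / 2)) \<longlongrightarrow> 1 - 0) at_top"
      by (intro tendsto_intros t1 t2)
    moreover have "eventually (\<lambda>x. erf (sqrt (x / 2)) - sqrt (2 * x / pi) * exp (- x / 2) = chi2_cdf k x) at_top"
      using eventually_gt_at_top[of 0] by eventually_elim (simp add: k3 chi2_cdf_3)
    ultimately show ?thesis by (auto intro: Lim_transform_eventually)
  qed
qed

lemma chi2_inv_Phi:
  assumes k: "k = 2 \<or> k = 3" and q: "0 < q" "q < 1"
  shows "0 \<le> chi2_inv k q" "q \<le> (1 + erf (sqrt (chi2_inv k q) / sqrt 2)) / 2"
proof -
  define S where "S = {x. q \<le> chi2_cdf k x}"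
  have "eventually (\<lambda>x. chi2_cdf k x > q) at_top"
    by (rule order_tendstoD(1)[OF chi2_cdf_at_top[OF k] q(2)])
  then obtain x0 where "chi2_cdf k x0 > q" using eventually_at_top_linorder by (metis order_refl)
  then have ne: "S \<noteq> {}" unfolding S_def by (auto intro!: exI[of _ x0])
  have pos: "x > 0" if "x \<in> S" for x
  proof (rule ccontr)
    assume "\<not> x > 0"
    then have "chi2_cdf k x = 0" by (simp add: chi2_cdf_def)
    then show False using that q unfolding S_def by simp
  qed
  have bdd: "bdd_below S" by (rule bdd_belowI[of _ 0]) (use pos in force)
  have c: "chi2_inv k q = Inf S" unfolding chi2_inv_def S_def ..
  show "0 \<le> chi2_inv k q" unfolding c by (rule cInf_greatest[OF ne]) (use pos in force)
  let ?P = "\<lambda>x. (1 + erf (sqrt x / sqrt 2)) / 2"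
  have "isCont ?P x" for x by (intro continuous_intros isCont_real_sqrt) auto
  then have "continuous_on UNIV ?P" by (intro continuous_at_imp_continuous_on) auto
  then have cl: "closed {x. q \<le> ?P x}"
    by (intro closed_Collect_le continuous_on_const)
  have sub: "S \<subseteq> {x. q \<le> ?P x}"
  proof
    fix x assume x: "x \<in> S"
    have "q \<le> chi2_cdf k x" using x unfolding S_def by simp
    also have "\<dots> \<le> ?P x" by (rule chi2_cdf_le_Phi[OF k pos[OF x]])
    finally show "x \<in> {x. q \<le> ?P x}" by simp
  qed
  have "Inf S \<in> closure S" by (rule closure_contains_Inf[OF ne bdd])
  also have "closure S \<subseteq> {x. q \<le> ?P x}" by (rule closure_minimal[OF sub cl])
  finally show "q \<le> ?P (chi2_inv k q)" unfolding c by simp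
qed

lemma gauss_lin_meas:
  assumes g: "gaussian_vec M X mu Sig"
  shows "(\<lambda>w. c \<bullet> X w) \<in> borel_measurable M"
proof -
  have [measurable]: "X \<in> borel_measurable M" using g unfolding gaussian_vec_def by simp
  show ?thesis by measurable
qed

lemma gauss_prob_pos:
  assumes M: "prob_space M" and g: "gaussian_vec M X mu Sig"
    and v: "c \<bullet> (Sig *v c) > 0"
  shows "measure M {w \<in> space M. c \<bullet> X w \<le> t}
     \<ge> (1 + erf ((t - c \<bullet> mu) / (sqrt (c \<bullet> (Sig *v c)) * sqrt 2))) / 2"
proof -
  interpret prob_space M by (rule M)
  let ?f = "\<lambda>w. c \<bullet> X w"
  have fm: "?f \<in> borel_measurable M" by (rule gauss_lin_meas[OF g])
  have d: "distr M borel ?f = density lborel (\<lambda>x. ennreal (normal_density (c \<bullet> mu) (sqrt (c \<bullet> (Sig *v c))) x))"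
    using g v unfolding gaussian_vec_def normal_measure_def by auto
  have "measure M {w \<in> space M. ?f w < t} = measure (distr M borel ?f) {..<t}"
    using fm by (subst measure_distr) (auto intro!: arg_cong[where f="measure M"])
  also have "\<dots> = (1 + erf ((t - c \<bullet> mu) / (sqrt (c \<bullet> (Sig *v c)) * sqrt 2))) / 2"
    unfolding d by (rule normal_cdf_lt) (use v in simp)
  finally have e: "measure M {w \<in> space M. ?f w < t} = (1 + erf ((t - c \<bullet> mu) / (sqrt (c \<bullet> (Sig *v c)) * sqrt 2))) / 2" .
  have "measure M {w \<in> space M. ?f w < t} \<le> measure M {w \<in> space M. ?f w \<le> t}"
    by (rule finite_measure_mono) (use fm in auto)
  then show ?thesis using e by simp
qed

lemma gauss_prob_zero:
  assumes M: "prob_space M" and g: "gaussian_vec M X mu Sig"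
    and v: "c \<bullet> (Sig *v c) = 0" and t: "c \<bullet> mu \<le> t"
  shows "measure M {w \<in> space M. c \<bullet> X w \<le> t} = 1"
proof -
  interpret prob_space M by (rule M)
  let ?f = "\<lambda>w. c \<bullet> X w"
  have fm: "?f \<in> borel_measurable M" by (rule gauss_lin_meas[OF g])
  have d: "distr M borel ?f = return borel (c \<bullet> mu)"
    using g v unfolding gaussian_vec_def normal_measure_def by auto
  have "measure M {w \<in> space M. ?f w \<le> t} = measure (distr M borel ?f) {..t}"
    using fm by (subst measure_distr) (auto intro!: arg_cong[where f="measure M"])
  also have "\<dots> = 1"
    unfolding d using t by (simp add: measure_return)
  finally show ?thesis .
qed

lemma pd_sqrt_invertible:
  fixes S Sig :: "real^'n^'n"
  assumes "S ** S = Sig" "pd_mat Sig"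
  shows "invertible S"
proof -
  have "inj (\<lambda>x. S *v x)"
  proof (rule injI)
    fix x y assume "S *v x = S *v y"
    then have "S *v (x - y) = 0" by (simp add: matrix_vector_mult_diff_distrib)
    then have "Sig *v (x - y) = 0" using assms(1) by (metis matrix_vector_mul_assoc matrix_vector_mult_0_right)
    then have "(x - y) \<bullet> (Sig *v (x - y)) = 0" by simp
    then show "x = y" using assms(2) unfolding pd_mat_def by (metis less_irrefl right_minus_eq)
  qed
  then obtain B where "B ** S = mat 1" using matrix_left_invertible_injective by blast
  then show ?thesis using invertible_left_inverse by blast
qed

lemma matrix_inv_props:
  fixes S :: "real^'n^'n"
  assumes "invertible S"
  shows "S ** matrix_inv S = mat 1" "matrix_inv S ** S = mat 1"
proof -
  have "\<exists>A'. S ** A' = mat 1 \<and> A' ** S = mat 1" using assms unfolding invertible_def .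
  then have "S ** matrix_inv S = mat 1 \<and> matrix_inv S ** S = mat 1"
    unfolding matrix_inv_def by (rule someI_ex)
  then show "S ** matrix_inv S = mat 1" "matrix_inv S ** S = mat 1" by auto
qed

lemma transpose_dot: "(transpose A *v x) \<bullet> y = x \<bullet> (A *v (y::real^'n))"
  by (metis dot_lmul_matrix transpose_matrix_vector transpose_transpose vector_transpose_matrix)

theorem theorem3:
  fixes M :: "'w measure"
    and p :: "'w \<Rightarrow> real^'d" and dob :: "'w \<Rightarrow> real^'d"
    and ph :: "real^'d" and Sigma_i Sigma_o S W :: "real^'d^'d"
    and Oh SW :: "(real^'d) set" and Psi :: "(real^'d) set"
    and aW aWio a_io :: "real^'d" and bW bWio b_io rs \<delta> \<epsilon> :: real
    and L :: "'l set" and a :: "'l \<Rightarrow> real^'d" and b :: "'l \<Rightarrow> real" and ob :: 'l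
  assumes dim: "CARD('d) = 2 \<or> CARD('d) = 3"
    and rs: "rs > 0" and delta: "0 < \<delta>" "\<delta> < 0.75"
    and M: "prob_space M"
    and p_gauss: "gaussian_vec M p ph Sigma_i"
    and d_gauss: "gaussian_vec M dob 0 Sigma_o"
    and Sigma_o_pd: "pd_mat Sigma_o"
    and indep: "prob_space.indep_var M borel p borel dob"
    and Oh_poly: "polytope Oh" and Oh_ne: "Oh \<noteq> {}"
    and S_sqrt: "psd_mat S" "S ** S = Sigma_o"
    and W_def: "W = matrix_inv S"
    and eps_def: "\<epsilon> = 1 - sqrt (1 - \<delta>)"
    and Psi_fin: "finite Psi" and SW_def: "SW = convex hull Psi"
    and SW_mink: "{x + v | x v. x \<in> (\<lambda>y. W *v y) ` Oh \<and> v \<bullet> v \<le> chi2_inv CARD('d) (1 - \<epsilon>)} \<subseteq> SW"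
    and ph_out: "W *v ph \<notin> SW"
    and qp_feas: "aW \<bullet> (W *v ph) - bW \<le> -1" "\<forall>\<psi>\<in>Psi. aW \<bullet> \<psi> - bW \<ge> 1"
    and qp_opt: "\<forall>a' b'. (a' \<bullet> (W *v ph) - b' \<le> -1 \<and> (\<forall>\<psi>\<in>Psi. a' \<bullet> \<psi> - b' \<ge> 1))
                    \<longrightarrow> (norm aW)\<^sup>2 \<le> (norm a')\<^sup>2"
    and hyp_shift: "aWio = aW" "bWio = Inf ((\<lambda>y. aW \<bullet> y) ` SW)"
    and hyp_back: "a_io = transpose W *v aWio" "b_io = bWio"
    and ob_in: "ob \<in> L" "a ob = a_io" "b ob = b_io"
    and in_cell: "ph \<in> buavc rs \<delta> Sigma_i L a b"
  shows "measure M {w \<in> space M. infdist (p w) ((\<lambda>x. x + dob w) ` Oh) \<ge> rs} \<ge> 1 - \<delta>"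
proof -
  interpret P: prob_space M by (rule M)
  define q where "q = sqrt (1 - \<delta>)"
  have q1: "1/2 < q"
  proof -
    have "sqrt (1/4) < sqrt (1 - \<delta>)" using delta by (subst real_sqrt_less_iff) simp
    moreover have "sqrt (1/4) = (1/2::real)" by (simp add: real_sqrt_divide)
    ultimately show ?thesis unfolding q_def by simp
  qed
  have q2: "q < 1" unfolding q_def using delta by simp
  have qq: "q * q = 1 - \<delta>" unfolding q_def using delta by simp
  have eps: "1 - \<epsilon> = q" unfolding eps_def q_def by simp
  define c where "c = chi2_inv CARD('d) q"
  have q0: "0 < q" using q1 by linarith
  have c0: "0 \<le> c" unfolding c_def by (rule chi2_inv_Phi(1)[OF dim q0 q2])
  have cq: "q \<le> (1 + erf (sqrt c / sqrt 2)) / 2" unfolding c_def by (rule chi2_inv_Phi(2)[OF dim q0 q2])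
  have mink: "(\<lambda>y. W *v y) x + v \<in> SW" if x: "x \<in> Oh" and v: "v \<bullet> v \<le> c" for x v
  proof -
    have "(\<lambda>y. W *v y) x + v \<in> {x + v | x v. x \<in> (\<lambda>y. W *v y) ` Oh \<and> v \<bullet> v \<le> chi2_inv CARD('d) (1 - \<epsilon>)}"
      by (rule CollectI, rule exI[of _ "W *v x"], rule exI[of _ v]) (use x v in \<open>simp add: eps c_def\<close>)
    then show ?thesis using SW_mink by (rule subsetD[rotated])
  qed
  have Sinv: "invertible S" by (rule pd_sqrt_invertible[OF S_sqrt(2) Sigma_o_pd])
  have SWm: "S ** W = mat 1" "W ** S = mat 1" using matrix_inv_props[OF Sinv] W_def by auto
  have Ssym: "transpose S = S" using S_sqrt(1) unfolding psd_mat_def sym_mat_def by simp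
  have SWt: "S ** transpose W = mat 1"
    using arg_cong[OF SWm(2), of transpose] by (simp add: matrix_transpose_mul Ssym)
  have aio: "a_io = transpose W *v aW" using hyp_back hyp_shift by simp
  have dotW: "a_io \<bullet> y = aW \<bullet> (W *v y)" for y unfolding aio by (rule transpose_dot)
  have Saio: "S *v a_io = aW" unfolding aio by (simp only: matrix_vector_mul_assoc SWt matrix_vector_mul_lid)
  obtain x0 where x0: "x0 \<in> Oh" using Oh_ne by blast
  have "(\<lambda>y. W *v y) x0 + 0 \<in> SW" by (rule mink) (use x0 c0 in auto)
  then have "Psi \<noteq> {}" using SW_def by auto
  then obtain \<psi>0 where \<psi>0: "\<psi>0 \<in> Psi" by blast
  have aW0: "aW \<noteq> 0"
  proof
    assume "aW = 0"
    then show False using qp_feas \<psi>0 by auto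
  qed
  have aio0: "a_io \<noteq> 0"
  proof
    assume "a_io = 0"
    then have "aW = 0" using Saio by simp
    then show False using aW0 by simp
  qed
  have cpt: "compact SW" unfolding SW_def by (rule finite_imp_compact_convex_hull[OF Psi_fin])
  have "compact ((\<lambda>y. aW \<bullet> y) ` SW)"
    by (rule compact_continuous_image[OF _ cpt]) (intro continuous_intros)
  then have bdd: "bdd_below ((\<lambda>y. aW \<bullet> y) ` SW)"
    by (intro bounded_imp_bdd_below compact_imp_bounded)
  have lowb: "bWio \<le> aW \<bullet> y" if "y \<in> SW" for y
    unfolding hyp_shift by (rule cInf_lower[OF _ bdd]) (use that in auto)
  have key: "bWio + sqrt c * norm aW \<le> aW \<bullet> (W *v x)" if x: "x \<in> Oh" for x
  proof -
    define v where "v = (- (sqrt c / norm aW)) *\<^sub>R aW"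
    have na: "norm aW > 0" using aW0 by simp
    have aa: "aW \<bullet> aW = (norm aW)\<^sup>2" by (simp add: power2_norm_eq_inner)
    have "v \<bullet> v = (sqrt c / norm aW)\<^sup>2 * (aW \<bullet> aW)" unfolding v_def by (simp add: power2_eq_square)
    also have "\<dots> = c" using na c0 unfolding aa by (simp add: power_divide)
    finally have vv: "v \<bullet> v \<le> c" by simp
    have "(\<lambda>y. W *v y) x + v \<in> SW" by (rule mink[OF x vv])
    then have "bWio \<le> aW \<bullet> (W *v x + v)" by (intro lowb) simp
    also have "aW \<bullet> (W *v x + v) = aW \<bullet> (W *v x) - sqrt c * norm aW"
      unfolding v_def inner_add_right inner_scaleR_right aa using na
      by (simp add: power2_eq_square)
    finally show ?thesis by simp
  qed
  define tA where "tA = b_io - rs * norm a_io"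
  define tB where "tB = sqrt c * norm aW"
  define HA where "HA = {x. a_io \<bullet> x \<le> tA}"
  define HB where "HB = {x. (- a_io) \<bullet> x \<le> tB}"
  define A where "A = {w \<in> space M. a_io \<bullet> p w \<le> tA}"
  define B where "B = {w \<in> space M. (- a_io) \<bullet> dob w \<le> tB}"
  define T where "T = {w \<in> space M. infdist (p w) ((\<lambda>x. x + dob w) ` Oh) \<ge> rs}"
  have sub: "A \<inter> B \<subseteq> T"
  proof
    fix w assume w: "w \<in> A \<inter> B"
    have ne: "(\<lambda>x. x + dob w) ` Oh \<noteq> {}" using Oh_ne by simp
    have "rs \<le> infdist (p w) ((\<lambda>x. x + dob w) ` Oh)"
      unfolding infdist_notempty[OF ne]
    proof (rule cINF_greatest)
      show "(\<lambda>x. x + dob w) ` Oh \<noteq> {}" by (rule ne)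
    next
      fix y assume "y \<in> (\<lambda>x. x + dob w) ` Oh"
      then obtain x where x: "x \<in> Oh" and y: "y = x + dob w" by blast
      have "a_io \<bullet> y = aW \<bullet> (W *v x) + a_io \<bullet> dob w" unfolding y inner_add_right dotW[of x] ..
      moreover have "- (a_io \<bullet> dob w) \<le> tB" using w unfolding B_def by simp
      ultimately have "a_io \<bullet> y \<ge> b_io" using key[OF x] hyp_back unfolding tB_def by simp
      moreover have "a_io \<bullet> p w \<le> tA" using w unfolding A_def by simp
      ultimately have "rs * norm a_io \<le> a_io \<bullet> (y - p w)" unfolding tA_def by (simp add: inner_diff_right)
      also have "\<dots> \<le> norm a_io * norm (y - p w)" by (rule norm_cauchy_schwarz)
      finally have "rs \<le> norm (y - p w)" using aio0 by (simp add: mult.commute)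
      then show "rs \<le> dist (p w) y" by (simp add: dist_norm norm_minus_commute)
    qed
    then show "w \<in> T" using w unfolding T_def A_def by simp
  qed
  have pm[measurable]: "p \<in> borel_measurable M" using p_gauss unfolding gaussian_vec_def by simp
  have dm[measurable]: "dob \<in> borel_measurable M" using d_gauss unfolding gaussian_vec_def by simp
  have tr: "infdist y ((\<lambda>x. x + d) ` Oh) = infdist (y - d) Oh" for y d :: "real^'d"
  proof -
    have "(\<lambda>x. x + d) ` Oh \<noteq> {}" using Oh_ne by simp
    then have "infdist y ((\<lambda>x. x + d) ` Oh) = (INF a\<in>(\<lambda>x. x + d) ` Oh. dist y a)"
      by (rule infdist_notempty)
    also have "\<dots> = (INF x\<in>Oh. dist (y - d) x)"
      by (simp add: image_comp dist_norm algebra_simps)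
    also have "\<dots> = infdist (y - d) Oh" using infdist_notempty[OF Oh_ne] by simp
    finally show ?thesis .
  qed
  have fm[measurable]: "(\<lambda>w. infdist (p w - dob w) Oh) \<in> borel_measurable M"
    by (rule borel_measurable_continuous_on[OF continuous_on_infdist[OF continuous_on_id]]) measurable
  have T_eq: "T = {w \<in> space M. rs \<le> infdist (p w - dob w) Oh}" unfolding T_def tr ..
  have Tm: "T \<in> sets M" unfolding T_eq by measurable
  have HAm: "HA \<in> sets borel" unfolding HA_def by (intro borel_closed closed_halfspace_le)
  have HBm: "HB \<in> sets borel" unfolding HB_def by (intro borel_closed closed_halfspace_le)
  have AB: "A \<inter> B = (\<lambda>x. (p x, dob x)) -` (HA \<times> HB) \<inter> space M"
    unfolding A_def B_def HA_def HB_def by auto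
  have PAB: "measure M (A \<inter> B) = measure M A * measure M B"
    unfolding AB using P.indep_varD[OF indep HAm HBm]
    by (simp add: A_def B_def HA_def HB_def vimage_def Int_def conj_commute)
  have PA: "measure M A \<ge> q"
  proof -
    define vi where "vi = a_io \<bullet> (Sigma_i *v a_io)"
    have vi0: "vi \<ge> 0" using p_gauss unfolding gaussian_vec_def psd_mat_def vi_def by simp
    define e where "e = erf_inv (2 * sqrt (1 - \<delta>) - 1)"
    have ee: "erf e = 2 * q - 1" unfolding e_def q_def[symmetric]
      by (rule erf_erf_inv) (use q1 q2 in auto)
    have cell: "a_io \<bullet> ph \<le> tA - sqrt (2 * vi) * e"
      using in_cell ob_in unfolding buavc_def tA_def vi_def e_def by auto
    show ?thesis
    proof (cases "vi = 0")
      case True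
      then have "measure M A = 1" unfolding A_def
        by (intro gauss_prob_zero[OF M p_gauss]) (use cell vi_def in auto)
      then show ?thesis using q2 by simp
    next
      case False
      then have vp: "vi > 0" using vi0 by simp
      have "sqrt (2 * vi) = sqrt vi * sqrt 2" by (simp add: real_sqrt_mult)
      then have "e * (sqrt vi * sqrt 2) \<le> tA - a_io \<bullet> ph" using cell by (simp add: algebra_simps)
      then have "e \<le> (tA - a_io \<bullet> ph) / (sqrt vi * sqrt 2)" using vp by (simp add: le_divide_eq)
      then have "erf e \<le> erf ((tA - a_io \<bullet> ph) / (sqrt vi * sqrt 2))" by (simp add: erf_le_iff)
      moreover have "measure M A \<ge> (1 + erf ((tA - a_io \<bullet> ph) / (sqrt vi * sqrt 2))) / 2"
        unfolding A_def vi_def by (rule gauss_prob_pos[OF M p_gauss]) (use vp vi_def in simp)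
      ultimately show ?thesis using ee by simp
    qed
  qed
  have PB: "measure M B \<ge> q"
  proof -
    have s1: "Sigma_o *v a_io = S *v aW"
      using S_sqrt(2)[symmetric] by (simp add: matrix_vector_mul_assoc[symmetric] Saio)
    have neg: "Sigma_o *v (- a_io) = - (Sigma_o *v a_io)"
      by (simp add: vec_eq_iff matrix_vector_mult_def sum_negf)
    have "(- a_io) \<bullet> (Sigma_o *v (- a_io)) = a_io \<bullet> (S *v aW)"
      unfolding neg s1 by simp
    also have "\<dots> = aW \<bullet> ((W ** S) *v aW)" unfolding dotW matrix_vector_mul_assoc ..
    also have "\<dots> = (norm aW)\<^sup>2" by (simp add: SWm power2_norm_eq_inner)
    finally have vB: "(- a_io) \<bullet> (Sigma_o *v (- a_io)) = (norm aW)\<^sup>2" .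
    have "measure M B \<ge> (1 + erf ((tB - (- a_io) \<bullet> 0) / (sqrt ((- a_io) \<bullet> (Sigma_o *v (- a_io))) * sqrt 2))) / 2"
      unfolding B_def by (rule gauss_prob_pos[OF M d_gauss]) (use vB aW0 in simp)
    also have "(tB - (- a_io) \<bullet> 0) / (sqrt ((- a_io) \<bullet> (Sigma_o *v (- a_io))) * sqrt 2) = sqrt c / sqrt 2"
      unfolding vB tB_def using aW0 by simp
    finally show ?thesis using cq by simp
  qed
  have "1 - \<delta> = q * q" using qq by simp
  also have "\<dots> \<le> measure M A * measure M B"
    using PA PB q1 by (intro mult_mono) auto
  also have "\<dots> = measure M (A \<inter> B)" using PAB by simp
  also have "\<dots> \<le> measure M T" by (rule P.finite_measure_mono[OF sub Tm])
  finally show ?thesis unfolding T_def .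
qed

end
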